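(* Let $(\Omega,\mathcal F,\mathbb P)$ be an atomless probability space, let $X$ and $Y$ be continuously distributed random variables on it, and let $p\in(0,1)$. The following three statements are equivalent: (i) $X$ and $Y$ are weakly comonotonic with respect to $\mathcal P^X_p$; (ii) $X$ and $Y$ are weakly comonotonic with respect to $\mathcal P^Y_p$; (iii) $A^X_p=A^Y_p$ $\mathbb P$-almost surely.
   Context: For a random variable $Z$ and $p\in(0,1)$, $\mathrm{VaR}_p(Z)=\inf\{x\in\mathbb R:\mathbb P(Z\le x)>p\}$ and $A^Z_p=\{\omega\in\Omega: Z(\omega)>\mathrm{VaR}_p(Z)\}$. Let $\mathcal P^Z_p=\{\delta_\omega\times\delta_{\omega'}:\omega\in A^Z_p,\ \omega'\in (A^Z_p)^c\}$, where $\delta_\omega$ is the point mass at $\omega$. For a set $\mathcal P$ of product probability measures $\pi_1\times\pi_2$ on $(\Omega^2,\mathcal F\otimes\mathcal F)$, random variables $X,Y$ are called weakly comonotonic with respect to $\mathcal P$ if $\iint_{\Omega^2}(X(\omega)-X(\omega'))(Y(\omega)-Y(\omega'))\,\pi_1(\mathrm d\omega)\pi_2(\mathrm d\omega')\ge 0$ for every $\pi_1\times\pi_2\in\mathcal P$; for point masses this means $(X(\omega)-X(\omega'))(Y(\omega)-Y(\omega'))\ge0$. Random variables that are $\mathbb P$-a.s. equal are identified, so a statement such as "$X$ and $Y$ are weakly comonotonic with respect to $\mathcal P^X_p$" means that it holds for some representative versions of $X$ and $Y$. *)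

theory Defs
  imports "HOL-Probability.Probability"
begin

definition atomless :: "'a measure \<Rightarrow> bool" where
  "atomless M \<longleftrightarrow> (\<forall>A\<in>sets M. measure M A > 0 \<longrightarrow>
     (\<exists>B\<in>sets M. B \<subseteq> A \<and> 0 < measure M B \<and> measure M B < measure M A))"

definition continuously_distributed :: "'a measure \<Rightarrow> ('a \<Rightarrow> real) \<Rightarrow> bool" where
  "continuously_distributed M Z \<longleftrightarrow> (\<forall>x. measure M {\<omega>\<in>space M. Z \<omega> = x} = 0)"

definition VaR :: "'a measure \<Rightarrow> real \<Rightarrow> ('a \<Rightarrow> real) \<Rightarrow> real" where
  "VaR M p Z = Inf {x. measure M {\<omega>\<in>space M. Z \<omega> \<le> x} > p}"

definition tail_set :: "'a measure \<Rightarrow> real \<Rightarrow> ('a \<Rightarrow> real) \<Rightarrow> 'a set" where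
  "tail_set M p Z = {\<omega>\<in>space M. Z \<omega> > VaR M p Z}"

text \<open>Weak comonotonicity w.r.t. the set of products of point masses
  \<delta>_\<omega> \<times> \<delta>_\<omega>' with \<omega> \<in> A^Z_p, \<omega>' \<in> (A^Z_p)^c (complement within the sample space).\<close>
definition weakly_comonotonic_pts :: "'a measure \<Rightarrow> 'a set \<Rightarrow> ('a \<Rightarrow> real) \<Rightarrow> ('a \<Rightarrow> real) \<Rightarrow> bool" where
  "weakly_comonotonic_pts M A X Y \<longleftrightarrow>
     (\<forall>\<omega>\<in>A. \<forall>\<omega>'\<in>space M - A. (X \<omega> - X \<omega>') * (Y \<omega> - Y \<omega>') \<ge> 0)"

text \<open>"X and Y are weakly comonotonic w.r.t. P^Z_p" up to a.s. identification, where Z is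
  X or Y (selected by the function sel): there are measurable versions X', Y' a.s. equal to
  X, Y such that X', Y' are weakly comonotonic w.r.t. P^{sel X' Y'}_p.\<close>
definition wc_wrt_tail :: "'a measure \<Rightarrow> real \<Rightarrow> (('a \<Rightarrow> real) \<Rightarrow> ('a \<Rightarrow> real) \<Rightarrow> ('a \<Rightarrow> real))
     \<Rightarrow> ('a \<Rightarrow> real) \<Rightarrow> ('a \<Rightarrow> real) \<Rightarrow> bool" where
  "wc_wrt_tail M p sel X Y \<longleftrightarrow>
     (\<exists>X' Y'. X' \<in> borel_measurable M \<and> Y' \<in> borel_measurable M \<and>
        (AE \<omega> in M. X \<omega> = X' \<omega>) \<and> (AE \<omega> in M. Y \<omega> = Y' \<omega>) \<and>
        weakly_comonotonic_pts M (tail_set M p (sel X' Y')) X' Y')"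

end

theory Submission
  imports Defs
begin

context prob_space begin

lemma F_eq_cdf:
  assumes Y: "Y \<in> borel_measurable M"
  shows "measure M {\<omega>\<in>space M. Y \<omega> \<le> x} = cdf (distr M borel Y) x"
  using Y unfolding cdf_def
  by (subst measure_distr) (auto intro!: arg_cong[where f="measure M"])

lemma VaR_F:
  assumes Y: "Y \<in> borel_measurable M" and c: "continuously_distributed M Y"
    and p: "0 < p" "p < 1"
  shows "measure M {\<omega>\<in>space M. Y \<omega> \<le> VaR M p Y} = p"
proof -
  define D where "D = distr M borel Y"
  interpret D: real_distribution D unfolding D_def using Y by simp
  define F where "F = cdf D"
  have FF: "\<And>x. measure M {\<omega>\<in>space M. Y \<omega> \<le> x} = F x"
    unfolding F_def D_def using F_eq_cdf[OF Y] by simp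
  have cont: "isCont F x" for x
  proof -
    have "measure D {x} = measure M {\<omega>\<in>space M. Y \<omega> = x}"
      unfolding D_def using Y by (subst measure_distr) (auto intro!: arg_cong[where f="measure M"])
    also have "\<dots> = 0" using c unfolding continuously_distributed_def by simp
    finally show ?thesis unfolding F_def using D.isCont_cdf by simp
  qed
  hence contF: "continuous_on UNIV F" by (simp add: continuous_at_imp_continuous_on)
  define S where "S = {x. F x > p}"
  have VaR: "VaR M p Y = Inf S" unfolding VaR_def S_def FF ..
  have "eventually (\<lambda>x. F x > p) at_top"
    using D.cdf_lim_at_top_prob p unfolding F_def by (simp add: order_tendstoD)
  then obtain x1 where "F x1 > p" by (meson eventually_at_top_linorder order_refl)
  hence ne: "S \<noteq> {}" unfolding S_def by auto
  have "eventually (\<lambda>x. F x < p) at_bot"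
    using D.cdf_lim_at_bot p unfolding F_def by (simp add: order_tendstoD)
  then obtain x0 where x0: "F x0 < p" by (meson eventually_at_bot_linorder order_refl)
  have lb: "\<forall>a\<in>S. x0 < a"
  proof
    fix a assume "a \<in> S"
    hence "F a > p" unfolding S_def by simp
    show "x0 < a"
    proof (rule ccontr)
      assume "\<not> x0 < a"
      hence "F a \<le> F x0" unfolding F_def by (simp add: D.cdf_nondecreasing)
      thus False using x0 \<open>F a > p\<close> by simp
    qed
  qed
  hence bdd: "bdd_below S" by (meson bdd_below.I less_imp_le)
  have "open S" unfolding S_def using contF
    by (simp add: open_Collect_less continuous_on_const)
  hence "Inf S \<notin> S" using Inf_notin_open lb by blast
  hence le: "F (Inf S) \<le> p" unfolding S_def by simp
  have "closed {x. F x \<ge> p}" using contF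
    by (simp add: closed_Collect_le continuous_on_const)
  hence "Inf S \<in> {x. F x \<ge> p}"
    by (rule closed_subset_contains_Inf) (use ne bdd in \<open>auto simp: S_def\<close>)
  thus ?thesis using le VaR FF by simp
qed

lemma AE_null:
  assumes "S \<in> sets M" "measure M S = 0" "{\<omega>\<in>space M. \<not> P \<omega>} \<subseteq> S"
  shows "AE \<omega> in M. P \<omega>"
  using assms by (intro AE_I'[of S]) (auto simp: null_sets_def emeasure_eq_measure)

lemma AE_version:
  assumes X: "X \<in> borel_measurable M" and X': "X' \<in> borel_measurable M"
    and ae: "AE \<omega> in M. X \<omega> = X' \<omega>"
  shows "VaR M p X' = VaR M p X"
    and "continuously_distributed M X \<Longrightarrow> continuously_distributed M X'"
    and "AE \<omega> in M. (\<omega> \<in> tail_set M p X) = (\<omega> \<in> tail_set M p X')"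
proof -
  have m: "measure M {\<omega>\<in>space M. X' \<omega> \<le> x} = measure M {\<omega>\<in>space M. X \<omega> \<le> x}" for x
    by (rule measure_eq_AE) (use ae X X' in auto)
  show v: "VaR M p X' = VaR M p X" unfolding VaR_def m ..
  show "continuously_distributed M X \<Longrightarrow> continuously_distributed M X'"
  proof -
    assume "continuously_distributed M X"
    moreover have "measure M {\<omega>\<in>space M. X' \<omega> = x} = measure M {\<omega>\<in>space M. X \<omega> = x}" for x
      by (rule measure_eq_AE) (use ae X X' in auto)
    ultimately show ?thesis unfolding continuously_distributed_def by simp
  qed
  show "AE \<omega> in M. (\<omega> \<in> tail_set M p X) = (\<omega> \<in> tail_set M p X')"
    using ae unfolding tail_set_def v by eventually_elim auto
qed

lemma wc_to_AE:
  assumes X: "X \<in> borel_measurable M" and cX: "continuously_distributed M X"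
    and Y: "Y \<in> borel_measurable M" and cY: "continuously_distributed M Y"
    and p: "0 < p" "p < 1"
    and wc: "weakly_comonotonic_pts M (tail_set M p X) X Y"
  shows "AE \<omega> in M. (\<omega> \<in> tail_set M p X) = (\<omega> \<in> tail_set M p Y)"
proof -
  define A where "A = tail_set M p X"
  define qx where "qx = VaR M p X"
  define qy where "qy = VaR M p Y"
  have FX: "measure M {\<omega>\<in>space M. X \<omega> \<le> qx} = p" unfolding qx_def by (rule VaR_F[OF X cX p])
  have FY: "measure M {\<omega>\<in>space M. Y \<omega> \<le> qy} = p" unfolding qy_def by (rule VaR_F[OF Y cY p])
  have Ac: "space M - A = {\<omega>\<in>space M. X \<omega> \<le> qx}" unfolding A_def tail_set_def qx_def by auto
  have Asets: "A \<in> sets M" unfolding A_def tail_set_def using X by measurable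
  have mA: "measure M A = 1 - p"
  proof -
    have "measure M (space M - A) = 1 - measure M A" using Asets prob_compl by simp
    thus ?thesis using Ac FX by simp
  qed
  have "A \<noteq> {}" using mA p by auto
  then obtain a where a: "a \<in> A" by auto
  have "space M - A \<noteq> {}"
  proof
    assume "space M - A = {}"
    hence "measure M (space M - A) = 0" by (metis measure_empty)
    thus False using Ac FX p by simp
  qed
  then obtain b where b: "b \<in> space M - A" by auto
  have mono: "Y w' \<le> Y w" if "w \<in> A" "w' \<in> space M - A" for w w'
  proof -
    have "X w > qx" "X w' \<le> qx" using that Ac unfolding A_def tail_set_def qx_def by auto
    moreover have "(X w - X w') * (Y w - Y w') \<ge> 0" using wc that
      unfolding weakly_comonotonic_pts_def A_def by blast
    ultimately show ?thesis by (simp add: zero_le_mult_iff)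
  qed
  define c where "c = Inf (Y ` A)"
  have bdd: "bdd_below (Y ` A)" using mono b by (auto intro!: bdd_belowI)
  have c1: "c \<le> Y w" if "w \<in> A" for w unfolding c_def using bdd that by (auto intro: cInf_lower)
  have c2: "Y w' \<le> c" if "w' \<in> space M - A" for w' unfolding c_def using a that mono
    by (auto intro!: cInf_greatest)
  have Asp: "A \<subseteq> space M" unfolding A_def tail_set_def by auto
  have ae1: "AE \<omega> in M. (\<omega> \<in> A) = (Y \<omega> > c)"
  proof (rule AE_null[of "{\<omega>\<in>space M. Y \<omega> = c}"])
    show "{\<omega> \<in> space M. Y \<omega> = c} \<in> sets M" using Y by measurable
    show "measure M {\<omega> \<in> space M. Y \<omega> = c} = 0" using cY unfolding continuously_distributed_def by simp
    show "{\<omega> \<in> space M. \<not> ((\<omega> \<in> A) = (c < Y \<omega>))} \<subseteq> {\<omega> \<in> space M. Y \<omega> = c}"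
      using c1 c2 by force
  qed
  have Ysets: "{\<omega>\<in>space M. Y \<omega> \<le> x} \<in> sets M" for x using Y by measurable
  have "measure M {\<omega>\<in>space M. Y \<omega> > c} = measure M A"
    by (rule measure_eq_AE) (use ae1 Asets Y in auto)
  moreover have "space M - {\<omega>\<in>space M. Y \<omega> \<le> c} = {\<omega>\<in>space M. Y \<omega> > c}" by auto
  ultimately have Fc: "measure M {\<omega>\<in>space M. Y \<omega> \<le> c} = p"
    using prob_compl[OF Ysets[of c]] mA by simp
  define lo where "lo = min c qy"
  define hi where "hi = max c qy"
  have Flo: "measure M {\<omega>\<in>space M. Y \<omega> \<le> lo} = p" unfolding lo_def min_def using Fc FY by simp
  have Fhi: "measure M {\<omega>\<in>space M. Y \<omega> \<le> hi} = p" unfolding hi_def max_def using Fc FY by simp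
  have sub: "{\<omega>\<in>space M. Y \<omega> \<le> lo} \<subseteq> {\<omega>\<in>space M. Y \<omega> \<le> hi}" unfolding lo_def hi_def by auto
  have ae2: "AE \<omega> in M. (Y \<omega> > c) = (Y \<omega> > qy)"
  proof (rule AE_null[of "{\<omega>\<in>space M. Y \<omega> \<le> hi} - {\<omega>\<in>space M. Y \<omega> \<le> lo}"])
    show "{\<omega>\<in>space M. Y \<omega> \<le> hi} - {\<omega>\<in>space M. Y \<omega> \<le> lo} \<in> sets M" using Ysets by auto
    show "measure M ({\<omega>\<in>space M. Y \<omega> \<le> hi} - {\<omega>\<in>space M. Y \<omega> \<le> lo}) = 0"
      using finite_measure_Diff[OF Ysets Ysets sub] Flo Fhi by simp
    show "{\<omega> \<in> space M. \<not> ((c < Y \<omega>) = (qy < Y \<omega>))} \<subseteq> {\<omega>\<in>space M. Y \<omega> \<le> hi} - {\<omega>\<in>space M. Y \<omega> \<le> lo}"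
      unfolding lo_def hi_def by auto
  qed
  show ?thesis using ae1 ae2 AE_space unfolding A_def[symmetric]
    by eventually_elim (use Asp in \<open>auto simp: tail_set_def qy_def\<close>)
qed

lemma AE_to_wc:
  assumes X: "X \<in> borel_measurable M" and Y: "Y \<in> borel_measurable M"
    and ae: "AE \<omega> in M. (\<omega> \<in> tail_set M p X) = (\<omega> \<in> tail_set M p Y)"
  shows "wc_wrt_tail M p (\<lambda>U V. U) X Y \<and> wc_wrt_tail M p (\<lambda>U V. V) X Y"
proof -
  define qx where "qx = VaR M p X"
  define qy where "qy = VaR M p Y"
  define N where "N = {\<omega>\<in>space M. (X \<omega> > qx) \<noteq> (Y \<omega> > qy)}"
  have Nsets: "N \<in> sets M" unfolding N_def using X Y by measurable
  have aeN: "AE \<omega> in M. \<omega> \<notin> N" using ae unfolding N_def tail_set_def qx_def qy_def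
    by eventually_elim auto
  define X' where "X' = (\<lambda>\<omega>. if \<omega> \<in> N then qx else X \<omega>)"
  define Y' where "Y' = (\<lambda>\<omega>. if \<omega> \<in> N then qy else Y \<omega>)"
  have X': "X' \<in> borel_measurable M" unfolding X'_def
    by (rule measurable_If_set) (use X Nsets in auto)
  have Y': "Y' \<in> borel_measurable M" unfolding Y'_def
    by (rule measurable_If_set) (use Y Nsets in auto)
  have aeX: "AE \<omega> in M. X \<omega> = X' \<omega>" using aeN by eventually_elim (auto simp: X'_def)
  have aeY: "AE \<omega> in M. Y \<omega> = Y' \<omega>" using aeN by eventually_elim (auto simp: Y'_def)
  have vX: "VaR M p X' = qx" unfolding qx_def by (rule AE_version(1)[OF X X' aeX])
  have vY: "VaR M p Y' = qy" unfolding qy_def by (rule AE_version(1)[OF Y Y' aeY])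
  have tX: "tail_set M p X' = {\<omega>\<in>space M. X \<omega> > qx} - N"
    unfolding tail_set_def vX by (auto simp: X'_def)
  have tY: "tail_set M p Y' = {\<omega>\<in>space M. X \<omega> > qx} - N"
    unfolding tail_set_def vY by (auto simp: Y'_def N_def)
  have wc: "weakly_comonotonic_pts M ({\<omega>\<in>space M. X \<omega> > qx} - N) X' Y'"
    unfolding weakly_comonotonic_pts_def
  proof (intro ballI)
    fix w w' assume w: "w \<in> {\<omega>\<in>space M. X \<omega> > qx} - N"
      and w': "w' \<in> space M - ({\<omega>\<in>space M. X \<omega> > qx} - N)"
    have "X' w > qx" "Y' w > qy" using w unfolding X'_def Y'_def N_def by auto
    moreover have "X' w' \<le> qx" "Y' w' \<le> qy" using w' unfolding X'_def Y'_def N_def by auto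
    ultimately show "(X' w - X' w') * (Y' w - Y' w') \<ge> 0" by simp
  qed
  show ?thesis unfolding wc_wrt_tail_def using X' Y' aeX aeY wc tX tY by metis
qed

end

theorem lemma3p1:
  fixes M :: "'a measure" and X Y :: "'a \<Rightarrow> real" and p :: real
  assumes "prob_space M" and "atomless M"
    and "X \<in> borel_measurable M" and "Y \<in> borel_measurable M"
    and "continuously_distributed M X" and "continuously_distributed M Y"
    and "0 < p" and "p < 1"
  shows "(wc_wrt_tail M p (\<lambda>U V. U) X Y \<longleftrightarrow> wc_wrt_tail M p (\<lambda>U V. V) X Y)
       \<and> (wc_wrt_tail M p (\<lambda>U V. V) X Y \<longleftrightarrow>
            (AE \<omega> in M. (\<omega> \<in> tail_set M p X) = (\<omega> \<in> tail_set M p Y)))"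
proof -
  interpret prob_space M by fact
  note X = assms(3) and Y = assms(4) and cX = assms(5) and cY = assms(6) and p = assms(7,8)
  let ?AE = "AE \<omega> in M. (\<omega> \<in> tail_set M p X) = (\<omega> \<in> tail_set M p Y)"
  have gen: "?AE" if X': "X' \<in> borel_measurable M" and Y': "Y' \<in> borel_measurable M"
    and aeX: "AE \<omega> in M. X \<omega> = X' \<omega>" and aeY: "AE \<omega> in M. Y \<omega> = Y' \<omega>"
    and ae': "AE \<omega> in M. (\<omega> \<in> tail_set M p X') = (\<omega> \<in> tail_set M p Y')" for X' Y'
  proof -
    have 1: "AE \<omega> in M. (\<omega> \<in> tail_set M p X) = (\<omega> \<in> tail_set M p X')"
      by (rule AE_version(3)[OF X X' aeX])
    have 2: "AE \<omega> in M. (\<omega> \<in> tail_set M p Y) = (\<omega> \<in> tail_set M p Y')"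
      by (rule AE_version(3)[OF Y Y' aeY])
    show ?thesis using 1 2 ae' by eventually_elim simp
  qed
  have i3: "?AE" if h: "wc_wrt_tail M p (\<lambda>U V. U) X Y"
  proof -
    obtain X' Y' where X': "X' \<in> borel_measurable M" and Y': "Y' \<in> borel_measurable M"
      and aeX: "AE \<omega> in M. X \<omega> = X' \<omega>" and aeY: "AE \<omega> in M. Y \<omega> = Y' \<omega>"
      and wc: "weakly_comonotonic_pts M (tail_set M p X') X' Y'"
      using h unfolding wc_wrt_tail_def by blast
    have "AE \<omega> in M. (\<omega> \<in> tail_set M p X') = (\<omega> \<in> tail_set M p Y')"
      by (rule wc_to_AE[OF X' AE_version(2)[OF X X' aeX cX] Y' AE_version(2)[OF Y Y' aeY cY] p wc])
    thus ?thesis using gen X' Y' aeX aeY by blast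
  qed
  have ii3: "?AE" if h: "wc_wrt_tail M p (\<lambda>U V. V) X Y"
  proof -
    obtain X' Y' where X': "X' \<in> borel_measurable M" and Y': "Y' \<in> borel_measurable M"
      and aeX: "AE \<omega> in M. X \<omega> = X' \<omega>" and aeY: "AE \<omega> in M. Y \<omega> = Y' \<omega>"
      and wc: "weakly_comonotonic_pts M (tail_set M p Y') X' Y'"
      using h unfolding wc_wrt_tail_def by blast
    have wc': "weakly_comonotonic_pts M (tail_set M p Y') Y' X'"
      using wc unfolding weakly_comonotonic_pts_def by (simp add: mult.commute)
    have "AE \<omega> in M. (\<omega> \<in> tail_set M p Y') = (\<omega> \<in> tail_set M p X')"
      by (rule wc_to_AE[OF Y' AE_version(2)[OF Y Y' aeY cY] X' AE_version(2)[OF X X' aeX cX] p wc'])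
    hence "AE \<omega> in M. (\<omega> \<in> tail_set M p X') = (\<omega> \<in> tail_set M p Y')"
      by eventually_elim simp
    thus ?thesis using gen X' Y' aeX aeY by blast
  qed
  have "?AE \<Longrightarrow> wc_wrt_tail M p (\<lambda>U V. U) X Y \<and> wc_wrt_tail M p (\<lambda>U V. V) X Y"
    by (rule AE_to_wc[OF X Y])
  thus ?thesis using i3 ii3 by blast
qed

end
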